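(* Let $1\le s\le n$, $0<\gamma<1$, and let $\mathbf{D}=[\mathbf{d}_1,\dots,\mathbf{d}_n]\in\mathbb{R}^{d\times n}$ be any matrix with $\max\{\|\mathbf{d}_i\|_2^2:i\in[n]\}\le\rho$. Then \[ w(\mathbf{D}S_\gamma)\ \le\ 6\gamma^{-1}\sqrt{s\rho\log(\sqrt2\,n/s)}. \]
   Context: $S_\gamma:=\{\mathbf{x}\in\mathbb{R}^n:\|\mathbf{x}\|_2=1,\ \|\mathbf{x}_T\|_1\ge\gamma\|\mathbf{x}_{T^c}\|_1\text{ for some }T\subset[n],|T|\le s\}$, where $\mathbf{x}_T$ agrees with $\mathbf{x}$ on $T$ and is $0$ elsewhere. $\mathbf{D}S_\gamma=\{\mathbf{D}\mathbf{x}:\mathbf{x}\in S_\gamma\}$, and $w(T)=\mathbb{E}\sup_{\mathbf{x}\in T}\langle\mathbf{g},\mathbf{x}\rangle$ with $\mathbf{g}\sim N(\mathbf{0},\mathbf{I}_d)$ is the Gaussian width. *)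

theory Defs
  imports "HOL-Probability.Probability"
begin

definition std_gaussian :: "(real^'d) measure" where
  "std_gaussian = density lborel
     (\<lambda>g. ennreal ((2 * pi) powr (- real CARD('d) / 2) * exp (- (norm g)\<^sup>2 / 2)))"

definition gaussian_width :: "(real^'d) set \<Rightarrow> real" where
  "gaussian_width T = (\<integral>g. (SUP x\<in>T. g \<bullet> x) \<partial>std_gaussian)"

definition S_gamma :: "nat \<Rightarrow> real \<Rightarrow> (real^'n) set" where
  "S_gamma s \<gamma> = {x. norm x = 1 \<and>
     (\<exists>T::'n set. card T \<le> s \<and>
        (\<Sum>i\<in>T. \<bar>x $ i\<bar>) \<ge> \<gamma> * (\<Sum>i\<in>-T. \<bar>x $ i\<bar>))}"

end

theory Submission
  imports Defs
begin


lemma G1: "(\<integral>\<^sup>+x. ennreal (std_normal_density x * exp (c * x)) \<partial>lborel) = ennreal (exp (c\<^sup>2 / 2))"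
proof -
  have eq: "std_normal_density x * exp (c * x) = exp (c\<^sup>2/2) * normal_density c 1 x" for x
  proof -
    have "- x\<^sup>2 / 2 + c * x = c\<^sup>2/2 + (- (x - c)\<^sup>2 / (2 * 1\<^sup>2))"
      by (simp add: power2_eq_square field_simps)
    then show ?thesis
      by (simp add: std_normal_density_def normal_density_def exp_add[symmetric] mult_exp_exp)
  qed
  have "(\<integral>\<^sup>+x. ennreal (std_normal_density x * exp (c * x)) \<partial>lborel)
      = (\<integral>\<^sup>+x. ennreal (exp (c\<^sup>2/2)) * ennreal (normal_density c 1 x) \<partial>lborel)"
    by (simp add: eq ennreal_mult)
  also have "\<dots> = ennreal (exp (c\<^sup>2/2)) * (\<integral>\<^sup>+x. ennreal (normal_density c 1 x) \<partial>lborel)"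
    by (rule nn_integral_cmult) simp
  also have "(\<integral>\<^sup>+x. ennreal (normal_density c 1 x) \<partial>lborel) = 1"
    by (subst nn_integral_eq_integral) auto
  finally show ?thesis by simp
qed

definition phi :: "real^'d \<Rightarrow> real" where
  "phi g = (2 * pi) powr (- real CARD('d) / 2) * exp (- (norm g)\<^sup>2 / 2)"

lemma norm_sq_basis: "(norm (g::'a::euclidean_space))\<^sup>2 = (\<Sum>b\<in>Basis. (g \<bullet> b)\<^sup>2)"
  unfolding power2_norm_eq_inner by (subst euclidean_inner) (simp add: power2_eq_square)

lemma phi_prod:
  fixes g v :: "real^'d"
  shows "phi g * exp (g \<bullet> v) = (\<Prod>b\<in>Basis. std_normal_density (g \<bullet> b) * exp ((v \<bullet> b) * (g \<bullet> b)))"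
proof -
  have cB: "card (Basis :: (real^'d) set) = CARD('d)" by simp
  have c1: "(2 * pi) powr (- real CARD('d) / 2) = (\<Prod>b\<in>(Basis :: (real^'d) set). 1 / sqrt (2 * pi))"
  proof -
    have "(2 * pi) powr (- real CARD('d) / 2) = ((2*pi) powr (-1/2)) powr real CARD('d)"
      by (simp add: powr_powr)
    also have "\<dots> = ((2*pi) powr (-1/2)) ^ CARD('d)"
      by (rule powr_realpow) simp
    also have "(2*pi) powr (-1/2) = 1 / sqrt (2 * pi)"
      by (simp add: powr_minus_divide powr_half_sqrt)
    finally show ?thesis by (simp add: cB)
  qed
  have c2: "exp (- (norm g)\<^sup>2 / 2) = (\<Prod>b\<in>(Basis :: (real^'d) set). exp (- (g \<bullet> b)\<^sup>2 / 2))"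
  proof -
    have "- (norm g)\<^sup>2 / 2 = (\<Sum>b\<in>(Basis :: (real^'d) set). - (g \<bullet> b)\<^sup>2 / 2)"
      by (simp add: norm_sq_basis[of g] sum_divide_distrib[symmetric] sum_negf)
    then show ?thesis by (simp add: exp_sum)
  qed
  have c3: "exp (g \<bullet> v) = (\<Prod>b\<in>(Basis :: (real^'d) set). exp ((v \<bullet> b) * (g \<bullet> b)))"
    by (simp add: euclidean_inner[of g v] exp_sum mult.commute)
  show ?thesis
    unfolding phi_def c1 c2 c3 std_normal_density_def prod.distrib[symmetric]
    by (simp add: mult.assoc)
qed

lemma phi_mgf:
  fixes v :: "real^'d"
  shows "(\<integral>\<^sup>+g. ennreal (phi g * exp (g \<bullet> v)) \<partial>lborel) = ennreal (exp ((norm v)\<^sup>2 / 2))"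
proof -
  have "(\<integral>\<^sup>+g. ennreal (phi g * exp (g \<bullet> v)) \<partial>lborel)
     = (\<integral>\<^sup>+g. (\<Prod>b\<in>Basis. ennreal (std_normal_density (g \<bullet> b) * exp ((v \<bullet> b) * (g \<bullet> b)))) \<partial>lborel)"
    by (simp add: phi_prod prod_ennreal mult_nonneg_nonneg)
  also have "\<dots> = (\<Prod>b\<in>Basis. (\<integral>\<^sup>+x. ennreal (std_normal_density x * exp ((v \<bullet> b) * x)) \<partial>lborel))"
    by (rule nn_integral_lborel_prod) auto
  also have "\<dots> = (\<Prod>b\<in>(Basis :: (real^'d) set). ennreal (exp ((v \<bullet> b)\<^sup>2/2)))"
    by (simp add: G1)
  also have "\<dots> = ennreal (exp ((norm v)\<^sup>2 / 2))"
    by (simp add: prod_ennreal exp_sum[symmetric] norm_sq_basis[of v] sum_divide_distrib)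
  finally show ?thesis .
qed

lemma sg_eq: "std_gaussian = density lborel (\<lambda>g. ennreal (phi g))"
  unfolding std_gaussian_def phi_def ..

lemma sets_sg[measurable_cong, simp]: "sets std_gaussian = sets borel"
  by (simp add: sg_eq)

lemma space_sg[simp]: "space std_gaussian = UNIV"
  by (simp add: sg_eq)

lemma phi_meas[measurable]: "phi \<in> borel_measurable borel"
  unfolding phi_def by measurable

lemma phi_nonneg: "0 \<le> phi g"
  unfolding phi_def by simp

lemma nn_sg: "f \<in> borel_measurable borel \<Longrightarrow>
   (\<integral>\<^sup>+g. f g \<partial>std_gaussian) = (\<integral>\<^sup>+g. ennreal (phi g) * f g \<partial>lborel)"
  unfolding sg_eq by (subst nn_integral_density) auto

lemma prob_sg: "prob_space (std_gaussian :: (real^'d) measure)"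
proof -
  have "emeasure (std_gaussian::(real^'d) measure) (space std_gaussian) = (\<integral>\<^sup>+(g::real^'d). ennreal (phi g) \<partial>lborel)"
    by (simp add: sg_eq emeasure_density)
  also have "\<dots> = (\<integral>\<^sup>+g. ennreal (phi g * exp (g \<bullet> (0::real^'d))) \<partial>lborel)" by simp
  also have "\<dots> = 1" by (subst phi_mgf) simp
  finally show ?thesis by (rule prob_spaceI)
qed

lemma mgf_sg:
  fixes v :: "real^'d"
  shows "has_bochner_integral std_gaussian (\<lambda>g. exp (g \<bullet> v)) (exp ((norm v)\<^sup>2 / 2))"
proof (rule has_bochner_integral_nn_integral)
  show "(\<integral>\<^sup>+g. ennreal (exp (g \<bullet> v)) \<partial>std_gaussian) = ennreal (exp ((norm v)\<^sup>2 / 2))"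
    by (subst nn_sg) (auto simp: ennreal_mult'[symmetric] phi_nonneg phi_mgf)
qed auto


lemma normsq_cart: "(norm (x::real^'n))\<^sup>2 = (\<Sum>i\<in>UNIV. (x$i)\<^sup>2)"
  by (simp add: norm_vec_def L2_set_def sum_nonneg)

lemma l1_bound:
  fixes x :: "real^'n"
  assumes "x \<in> S_gamma s \<gamma>" "0 < \<gamma>"
  shows "(\<Sum>i\<in>UNIV. \<bar>x$i\<bar>) \<le> (1 + 1/\<gamma>) * sqrt (real s)"
proof -
  obtain T :: "'n set" where nx: "norm x = 1" and cT: "card T \<le> s"
    and c: "(\<Sum>i\<in>T. \<bar>x $ i\<bar>) \<ge> \<gamma> * (\<Sum>i\<in>-T. \<bar>x $ i\<bar>)"
    using assms(1) unfolding S_gamma_def by auto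
  have split: "(\<Sum>i\<in>UNIV. \<bar>x$i\<bar>) = (\<Sum>i\<in>T. \<bar>x$i\<bar>) + (\<Sum>i\<in>-T. \<bar>x$i\<bar>)"
    by (subst sum.union_disjoint[symmetric]) auto
  have c2: "(\<Sum>i\<in>-T. \<bar>x$i\<bar>) \<le> (1/\<gamma>) * (\<Sum>i\<in>T. \<bar>x$i\<bar>)"
    using c assms(2) by (simp add: field_simps)
  have sq: "(\<Sum>i\<in>T. \<bar>x$i\<bar>)\<^sup>2 \<le> (\<Sum>i\<in>T. (\<bar>x$i\<bar>)\<^sup>2) * card T"
    by (rule sum_squared_le_sum_of_squares)
  have "(\<Sum>i\<in>T. (\<bar>x$i\<bar>)\<^sup>2) \<le> (\<Sum>i\<in>UNIV. (x$i)\<^sup>2)"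
  proof -
    have "(\<Sum>i\<in>T. (\<bar>x$i\<bar>)\<^sup>2) = (\<Sum>i\<in>T. (x$i)\<^sup>2)" by simp
    also have "\<dots> \<le> (\<Sum>i\<in>UNIV. (x$i)\<^sup>2)" by (rule sum_mono2) auto
    finally show ?thesis .
  qed
  also have "\<dots> = 1" using nx normsq_cart[of x] by simp
  finally have le1: "(\<Sum>i\<in>T. (\<bar>x$i\<bar>)\<^sup>2) \<le> 1" .
  have "(\<Sum>i\<in>T. \<bar>x$i\<bar>)\<^sup>2 \<le> real s"
  proof -
    have "(\<Sum>i\<in>T. (\<bar>x$i\<bar>)\<^sup>2) * real (card T) \<le> 1 * real s"
      using le1 cT by (intro mult_mono) auto
    then show ?thesis using sq by linarith
  qed
  then have t: "(\<Sum>i\<in>T. \<bar>x$i\<bar>) \<le> sqrt (real s)"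
    using real_le_rsqrt by blast
  have "(\<Sum>i\<in>UNIV. \<bar>x$i\<bar>) \<le> (1 + 1/\<gamma>) * (\<Sum>i\<in>T. \<bar>x$i\<bar>)"
  proof -
    have "(1 + 1/\<gamma>) * (\<Sum>i\<in>T. \<bar>x$i\<bar>) = (\<Sum>i\<in>T. \<bar>x$i\<bar>) + (1/\<gamma>) * (\<Sum>i\<in>T. \<bar>x$i\<bar>)"
      by (simp add: distrib_right)
    then show ?thesis using split c2 by linarith
  qed
  also have "\<dots> \<le> (1 + 1/\<gamma>) * sqrt (real s)"
    using t assms(2) by (intro mult_left_mono) auto
  finally show ?thesis .
qed

lemma det_bound:
  fixes x :: "real^'n" and h :: "'n \<Rightarrow> real"
  assumes "x \<in> S_gamma s \<gamma>" "0 < \<gamma>" "0 \<le> \<tau>"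
  shows "(\<Sum>i\<in>UNIV. x$i * h i) \<le> \<tau> * ((1 + 1/\<gamma>) * sqrt (real s))
            + sqrt (\<Sum>i\<in>UNIV. (max 0 (\<bar>h i\<bar> - \<tau>))\<^sup>2)"
proof -
  have nx: "norm x = 1" using assms(1) unfolding S_gamma_def by auto
  have pt: "x$i * h i \<le> \<tau> * \<bar>x$i\<bar> + \<bar>x$i\<bar> * max 0 (\<bar>h i\<bar> - \<tau>)" for i
  proof -
    have a1: "x$i * h i \<le> \<bar>x$i\<bar> * \<bar>h i\<bar>" by (metis abs_ge_self abs_mult)
    have a2: "\<bar>h i\<bar> \<le> \<tau> + max 0 (\<bar>h i\<bar> - \<tau>)" by simp
    have "\<bar>x$i\<bar> * \<bar>h i\<bar> \<le> \<bar>x$i\<bar> * (\<tau> + max 0 (\<bar>h i\<bar> - \<tau>))"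
      using a2 by (intro mult_left_mono) auto
    then have "x$i * h i \<le> \<bar>x$i\<bar> * (\<tau> + max 0 (\<bar>h i\<bar> - \<tau>))" using a1 by linarith
    then show ?thesis by (simp add: algebra_simps)
  qed
  have s1: "(\<Sum>i\<in>UNIV. x$i * h i) \<le> (\<Sum>i\<in>UNIV. \<tau> * \<bar>x$i\<bar> + \<bar>x$i\<bar> * max 0 (\<bar>h i\<bar> - \<tau>))"
    by (rule sum_mono) (rule pt)
  have s2: "(\<Sum>i\<in>UNIV. \<tau> * \<bar>x$i\<bar> + \<bar>x$i\<bar> * max 0 (\<bar>h i\<bar> - \<tau>)) = \<tau> * (\<Sum>i\<in>UNIV. \<bar>x$i\<bar>) + (\<Sum>i\<in>UNIV. \<bar>x$i\<bar> * max 0 (\<bar>h i\<bar> - \<tau>))"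
    by (simp add: sum.distrib sum_distrib_left)
  have s3: "\<tau> * (\<Sum>i\<in>UNIV. \<bar>x$i\<bar>) \<le> \<tau> * ((1 + 1/\<gamma>) * sqrt (real s))"
    using l1_bound[OF assms(1,2)] assms(3) by (intro mult_left_mono)
  have s4: "(\<Sum>i\<in>UNIV. \<bar>x$i\<bar> * max 0 (\<bar>h i\<bar> - \<tau>)) \<le> sqrt (\<Sum>i\<in>UNIV. (max 0 (\<bar>h i\<bar> - \<tau>))\<^sup>2)"
  proof -
    have "(\<Sum>i\<in>UNIV. \<bar>x$i\<bar> * max 0 (\<bar>h i\<bar> - \<tau>))\<^sup>2
        \<le> (\<Sum>i\<in>UNIV. (\<bar>x$i\<bar>)\<^sup>2) * (\<Sum>i\<in>UNIV. (max 0 (\<bar>h i\<bar> - \<tau>))\<^sup>2)"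
      by (rule Cauchy_Schwarz_ineq_sum)
    also have "(\<Sum>i\<in>UNIV. (\<bar>x$i\<bar>)\<^sup>2) = 1" using nx normsq_cart[of x] by simp
    finally show ?thesis by (intro real_le_rsqrt) simp
  qed
  show ?thesis using s1 s2 s3 s4 by linarith
qed

lemma amgm_sqrt: "0 < a \<Longrightarrow> 0 \<le> y \<Longrightarrow> sqrt y \<le> (y / a + a) / 2"
proof -
  assume a: "0 < a" and y: "0 \<le> y"
  have q: "(sqrt y)\<^sup>2 = y" using y by simp
  have "0 \<le> (sqrt y - a)\<^sup>2" by simp
  then have "0 \<le> (sqrt y)\<^sup>2 + a\<^sup>2 - 2 * sqrt y * a" by (simp only: power2_diff)
  then have h: "2 * a * sqrt y \<le> y + a\<^sup>2" using q by (simp add: mult.commute mult.left_commute)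
  have e: "(y / a + a) / 2 = (y + a\<^sup>2) / (2 * a)" using a by (simp add: field_simps power2_eq_square)
  show ?thesis unfolding e using a h by (simp add: le_divide_eq mult.commute)
qed

lemma tail_pt:
  fixes l \<tau> u :: real
  assumes "0 < l" "0 \<le> \<tau>"
  shows "(max 0 (\<bar>u\<bar> - \<tau>))\<^sup>2 \<le> (2 / l\<^sup>2) * exp (- l * \<tau>) * (exp (l * u) + exp (- l * u))"
proof (cases "\<bar>u\<bar> - \<tau> \<le> 0")
  case True
  then show ?thesis using assms by (simp add: max_def add_pos_pos)
next
  case False
  define w where "w = \<bar>u\<bar> - \<tau>"
  have w: "0 < w" using False w_def by simp
  have "(l*w)\<^sup>2 / 2 \<le> exp (l * w)"
    using exp_lower_Taylor_quadratic[of "l*w"] w assms(1) mult_pos_pos[of l w] by linarith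
  then have "w\<^sup>2 \<le> (2 / l\<^sup>2) * exp (l * w)"
    using assms(1) by (simp add: field_simps power_mult_distrib)
  also have "exp (l * w) = exp (- l * \<tau>) * exp (l * \<bar>u\<bar>)"
    by (simp add: w_def mult_exp_exp algebra_simps)
  also have "(2 / l\<^sup>2) * (exp (- l * \<tau>) * exp (l * \<bar>u\<bar>))
      \<le> (2 / l\<^sup>2) * (exp (- l * \<tau>) * (exp (l * u) + exp (- l * u)))"
    by (intro mult_left_mono) (cases "u \<ge> 0", auto simp: add_pos_pos)
  finally have "w\<^sup>2 \<le> (2 / l\<^sup>2) * exp (- l * \<tau>) * (exp (l * u) + exp (- l * u))"
    by (simp add: mult.assoc)
  moreover have "max 0 (\<bar>u\<bar> - \<tau>) = w" using w w_def by simp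
  ultimately show ?thesis by simp
qed


lemma inner_Dx:
  fixes D :: "real^'n^'d" and g :: "real^'d"
  shows "g \<bullet> (D *v x) = (\<Sum>i\<in>UNIV. x$i * (g \<bullet> column i D))"
  by (simp add: matrix_mult_sum inner_sum_right scalar_mult_eq_scaleR)

lemma int_le_bound:
  fixes F B :: "'a \<Rightarrow> real"
  assumes "\<And>g. F g \<le> B g" "integrable M B" "integral\<^sup>L M B \<le> C" "0 \<le> C"
  shows "integral\<^sup>L M F \<le> C"
proof (cases "integrable M F")
  case True
  then have "integral\<^sup>L M F \<le> integral\<^sup>L M B"
    using assms(1,2) by (intro integral_mono) auto
  then show ?thesis using assms(3) by linarith
next
  case False
  then show ?thesis using assms(4) by (simp add: not_integrable_integral_eq)
qed

lemma S_ne: "1 \<le> s \<Longrightarrow> S_gamma s \<gamma> \<noteq> ({} :: (real^'n) set)"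
proof -
  assume s: "1 \<le> s"
  fix k :: 'n
  have "axis k (1::real) \<in> S_gamma s \<gamma>"
    unfolding S_gamma_def
  proof (intro CollectI conjI exI[of _ "{k}"])
    show "norm (axis k (1::real)) = 1" by simp
    show "card {k} \<le> s" using s by simp
    have "(\<Sum>i\<in>-{k}. \<bar>axis k (1::real) $ i\<bar>) = 0"
      by (intro sum.neutral) (auto simp: axis_def)
    then show "\<gamma> * (\<Sum>i\<in>-{k}. \<bar>axis k (1::real) $ i\<bar>) \<le> (\<Sum>i\<in>{k}. \<bar>axis k (1::real) $ i\<bar>)"
      by (simp add: axis_def)
  qed
  then show ?thesis by auto
qed


lemma main_bound:
  fixes D :: "real^'n^'d" and s :: nat and \<gamma> \<rho> \<tau> l :: real
  assumes g0: "0 < \<gamma>" and s1: "1 \<le> s" and t0: "0 \<le> \<tau>" and l0: "0 < l"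
    and col: "\<forall>i. (norm (column i D))\<^sup>2 \<le> \<rho>"
  shows "gaussian_width ((\<lambda>x. D *v x) ` S_gamma s \<gamma>)
     \<le> \<tau> * ((1 + 1/\<gamma>) * sqrt (real s))
        + sqrt (real CARD('n) * (4 / l\<^sup>2) * exp (- l * \<tau> + l\<^sup>2 * \<rho> / 2))"
proof -
  define R where "R = (1 + 1/\<gamma>) * sqrt (real s)"
  define E where "E = real CARD('n) * (4 / l\<^sup>2) * exp (- l * \<tau> + l\<^sup>2 * \<rho> / 2)"
  define a where "a = sqrt E"
  have E0: "0 < E" unfolding E_def using l0 by simp
  have a0: "0 < a" unfolding a_def using E0 by simp
  define Y where "Y g = (\<Sum>i\<in>UNIV. (max 0 (\<bar>g \<bullet> column i D\<bar> - \<tau>))\<^sup>2)" for g :: "real^'d"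
  define Z where "Z g = (2 / l\<^sup>2) * exp (- l * \<tau>) *
      (\<Sum>i\<in>UNIV. exp (g \<bullet> (l *\<^sub>R column i D)) + exp (g \<bullet> (- l *\<^sub>R column i D)))" for g :: "real^'d"
  define zv where "zv = (2 / l\<^sup>2) * exp (- l * \<tau>) *
      (\<Sum>i\<in>(UNIV::'n set). exp ((norm (l *\<^sub>R column i D))\<^sup>2 / 2) + exp ((norm (- l *\<^sub>R column i D))\<^sup>2 / 2))"
  interpret P: prob_space "std_gaussian :: (real^'d) measure" by (rule prob_sg)
  have hZ: "has_bochner_integral std_gaussian Z zv"
    unfolding Z_def zv_def
    by (intro has_bochner_integral_mult_right has_bochner_integral_sum has_bochner_integral_add mgf_sg)
  have zvE: "zv \<le> E"
  proof -
    have "exp ((norm (c *\<^sub>R column i D))\<^sup>2 / 2) \<le> exp (l\<^sup>2 * \<rho> / 2)" if "\<bar>c\<bar> = l" for c i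
    proof -
      have "(norm (c *\<^sub>R column i D))\<^sup>2 = l\<^sup>2 * (norm (column i D))\<^sup>2"
        using that by (simp add: power_mult_distrib)
      also have "\<dots> \<le> l\<^sup>2 * \<rho>" using col by (intro mult_left_mono) auto
      finally show ?thesis by simp
    qed
    then have "(\<Sum>i\<in>(UNIV::'n set). exp ((norm (l *\<^sub>R column i D))\<^sup>2 / 2) + exp ((norm (- l *\<^sub>R column i D))\<^sup>2 / 2))
        \<le> (\<Sum>i\<in>(UNIV::'n set). 2 * exp (l\<^sup>2 * \<rho> / 2))"
      using l0 by (intro sum_mono) (smt (verit))
    also have "\<dots> = real CARD('n) * 2 * exp (l\<^sup>2 * \<rho> / 2)" by simp
    finally have "zv \<le> (2 / l\<^sup>2) * exp (- l * \<tau>) * (real CARD('n) * 2 * exp (l\<^sup>2 * \<rho> / 2))"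
      unfolding zv_def using l0 by (intro mult_left_mono) auto
    also have "\<dots> = real CARD('n) * (4 / l\<^sup>2) * (exp (- l * \<tau>) * exp (l\<^sup>2 * \<rho> / 2))"
      by (simp add: field_simps del: mult_exp_exp)
    also have "exp (- l * \<tau>) * exp (l\<^sup>2 * \<rho> / 2) = exp (- l * \<tau> + l\<^sup>2 * \<rho> / 2)"
      by (rule exp_add[symmetric])
    also have "real CARD('n) * (4 / l\<^sup>2) * exp (- l * \<tau> + l\<^sup>2 * \<rho> / 2) = E" unfolding E_def ..
    finally show ?thesis .
  qed
  have Y0: "0 \<le> Y g" for g unfolding Y_def by (intro sum_nonneg) auto
  have YZ: "Y g \<le> Z g" for g
  proof -
    have "Y g \<le> (\<Sum>i\<in>UNIV. (2 / l\<^sup>2) * exp (- l * \<tau>) *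
        (exp (l * (g \<bullet> column i D)) + exp (- l * (g \<bullet> column i D))))"
      unfolding Y_def by (intro sum_mono tail_pt l0 t0)
    also have "\<dots> = Z g" unfolding Z_def by (simp add: sum_distrib_left)
    finally show ?thesis .
  qed
  have Ymeas: "Y \<in> borel_measurable std_gaussian"
    unfolding Y_def by measurable
  have intZ: "integrable std_gaussian Z" using hZ by (rule integrable.intros)
  have AEYZ: "AE x in std_gaussian. norm (Y x) \<le> norm (Z x)"
    using Y0 YZ by (intro AE_I2) (smt (verit) real_norm_def)
  have intY: "integrable std_gaussian Y"
    using Bochner_Integration.integrable_bound[OF intZ Ymeas AEYZ] .
  have intYE: "integral\<^sup>L std_gaussian Y \<le> E"
  proof -
    have "integral\<^sup>L std_gaussian Y \<le> integral\<^sup>L std_gaussian Z"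
      using intY intZ YZ by (intro integral_mono) auto
    also have "\<dots> = zv" using hZ by (rule has_bochner_integral_integral_eq)
    finally show ?thesis using zvE by linarith
  qed
  define B where "B g = (\<tau> * R + a / 2) + Y g / (2 * a)" for g :: "real^'d"
  have intB: "integrable std_gaussian B" unfolding B_def using intY by auto
  have intBv: "integral\<^sup>L std_gaussian B = (\<tau> * R + a / 2) + integral\<^sup>L std_gaussian Y / (2 * a)"
    unfolding B_def using intY P.prob_space by simp
  have BC: "integral\<^sup>L std_gaussian B \<le> \<tau> * R + sqrt E"
  proof -
    have "integral\<^sup>L std_gaussian Y / (2 * a) \<le> E / (2 * a)"
      using intYE a0 by (intro divide_right_mono) auto
    also have "E / (2 * a) = a / 2" using a0 unfolding a_def using E0
      by (simp add: field_simps)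
    finally show ?thesis using intBv unfolding a_def by linarith
  qed
  have FB: "(SUP y\<in>(\<lambda>x. D *v x) ` S_gamma s \<gamma>. g \<bullet> y) \<le> B g" for g :: "real^'d"
  proof (rule cSUP_least)
    show "(\<lambda>x. D *v x) ` S_gamma s \<gamma> \<noteq> {}" using S_ne[OF s1] by auto
  next
    fix y assume "y \<in> (\<lambda>x. D *v x) ` S_gamma s \<gamma>"
    then obtain x where x: "x \<in> S_gamma s \<gamma>" and y: "y = D *v x" by auto
    have "g \<bullet> y = (\<Sum>i\<in>UNIV. x$i * (g \<bullet> column i D))" using y by (simp add: inner_Dx)
    also have "\<dots> \<le> \<tau> * R + sqrt (Y g)"
      unfolding R_def Y_def by (rule det_bound[OF x g0 t0])
    also have "sqrt (Y g) \<le> (Y g / a + a) / 2" by (rule amgm_sqrt[OF a0 Y0])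
    also have "\<tau> * R + (Y g / a + a) / 2 = B g" unfolding B_def using a0 by (simp add: field_simps)
    finally show "g \<bullet> y \<le> B g" by simp
  qed
  have "gaussian_width ((\<lambda>x. D *v x) ` S_gamma s \<gamma>) \<le> \<tau> * R + sqrt E"
    unfolding gaussian_width_def
  proof (rule int_le_bound[OF FB intB BC])
    show "0 \<le> \<tau> * R + sqrt E" unfolding R_def using t0 g0 E0 by simp
  qed
  then show ?thesis unfolding R_def E_def .
qed


theorem theorem4p8:
  fixes D :: "real^'n^'d" and s :: nat and \<gamma> \<rho> :: real
  assumes "1 \<le> s" and "s \<le> CARD('n)"
    and "0 < \<gamma>" and "\<gamma> < 1"
    and "\<forall>i. (norm (column i D))\<^sup>2 \<le> \<rho>"
  shows "gaussian_width ((\<lambda>x. D *v x) ` S_gamma s \<gamma>)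
           \<le> 6 / \<gamma> * sqrt (real s * \<rho> * ln (sqrt 2 * real CARD('n) / real s))"
proof -
  note s1 = assms(1) and sn = assms(2) and g0 = assms(3) and g1 = assms(4) and col = assms(5)
  define n where "n = real CARD('n)"
  define L where "L = ln (sqrt 2 * n / real s)"
  have spos: "0 < real s" using s1 by simp
  have sle: "real s \<le> n" unfolding n_def using sn by simp
  have npos: "0 < n" using spos sle by simp
  have argpos: "0 < sqrt 2 * n / real s" using npos spos by simp
  have eL: "exp L = sqrt 2 * n / real s" unfolding L_def using argpos by simp
  have "sqrt 2 \<le> sqrt 2 * n / real s" using sle spos by (simp add: field_simps)
  then have "ln (sqrt 2) \<le> L" unfolding L_def using argpos by (subst ln_le_cancel_iff) auto
  moreover have "ln (sqrt 2) = ln 2 / 2" by (simp add: ln_sqrt)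
  ultimately have L13: "1/3 \<le> L" using ln2_ge_two_thirds by linarith
  have rho0: "0 \<le> \<rho>" using col by (metis order_trans zero_le_power2)
  have RHS0: "0 \<le> 6 / \<gamma> * sqrt (real s * \<rho> * L)"
    using g0 rho0 L13 by simp
  define Q where "Q = sqrt (real s * \<rho> * L)"
  show ?thesis
  proof (cases "\<rho> = 0")
    case True
    have c0: "column i D = 0" for i using col True by simp
    have FB: "(SUP y\<in>(\<lambda>x. D *v x) ` S_gamma s \<gamma>. g \<bullet> y) \<le> (\<lambda>_. 0::real) g" for g :: "real^'d"
    proof (rule cSUP_least)
      show "(\<lambda>x. D *v x) ` S_gamma s \<gamma> \<noteq> {}" using S_ne[OF s1] by auto
    next
      fix y assume "y \<in> (\<lambda>x. D *v x) ` S_gamma s \<gamma>"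
      then obtain x where y: "y = D *v x" by auto
      show "g \<bullet> y \<le> (\<lambda>_. 0::real) g" using y by (simp add: inner_Dx c0)
    qed
    show ?thesis unfolding gaussian_width_def
      by (rule int_le_bound[OF FB]) (use RHS0 in \<open>simp_all add: L_def n_def\<close>)
  next
    case False
    then have rpos: "0 < \<rho>" using rho0 by simp
    have Lpos: "0 < L" using L13 by simp
    show ?thesis
    proof (cases "1/2 \<le> L")
      case True
      define \<tau> where "\<tau> = 2 * sqrt (\<rho> * L)"
      define l where "l = 2 * sqrt (L / \<rho>)"
      have t0: "0 \<le> \<tau>" unfolding \<tau>_def using rpos Lpos by simp
      have l0: "0 < l" unfolding l_def using rpos Lpos by simp
      have lt: "l * \<tau> = 4 * L"
      proof -
        have a1: "sqrt (L / \<rho>) * sqrt (\<rho> * L) = sqrt (L / \<rho> * (\<rho> * L))"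
          by (rule real_sqrt_mult[symmetric])
        have a2: "L / \<rho> * (\<rho> * L) = L\<^sup>2" using rpos by (simp add: field_simps power2_eq_square)
        have "l * \<tau> = 4 * (sqrt (L / \<rho>) * sqrt (\<rho> * L))" unfolding l_def \<tau>_def by simp
        also have "\<dots> = 4 * L" unfolding a1 a2 using Lpos by simp
        finally show ?thesis .
      qed
      have l2: "l\<^sup>2 = 4 * L / \<rho>" unfolding l_def using rpos Lpos by (simp add: power_mult_distrib)
      have ex: "- l * \<tau> + l\<^sup>2 * \<rho> / 2 = - (2 * L)" using lt l2 rpos by simp
      have e2: "exp (- (2 * L)) = (real s)\<^sup>2 / (2 * n\<^sup>2)"
      proof -
        have "exp (- (2 * L)) = inverse ((exp L)\<^sup>2)"
          by (simp add: exp_minus power2_eq_square mult_exp_exp)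
        also have "\<dots> = (real s)\<^sup>2 / (2 * n\<^sup>2)" unfolding eL using spos npos
          by (simp add: power_divide power_mult_distrib field_simps)
        finally show ?thesis .
      qed
      have E_eq: "n * (4 / l\<^sup>2) * exp (- l * \<tau> + l\<^sup>2 * \<rho> / 2) = \<rho> * (real s)\<^sup>2 / (2 * n * L)"
      proof -
        have "n * (4 / l\<^sup>2) * exp (- l * \<tau> + l\<^sup>2 * \<rho> / 2) = n * (4 / l\<^sup>2) * exp (- (2 * L))"
          by (simp only: ex)
        also have "\<dots> = n * (4 / (4 * L / \<rho>)) * ((real s)\<^sup>2 / (2 * n\<^sup>2))" by (simp only: e2 l2)
        also have "\<dots> = \<rho> * (real s)\<^sup>2 / (2 * n * L)"
          using rpos Lpos npos by (simp add: field_simps power2_eq_square)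
        finally show ?thesis .
      qed
      have "\<rho> * (real s)\<^sup>2 / (2 * n * L) \<le> \<rho> * real s / (2 * L)"
      proof -
        have "\<rho> * (real s)\<^sup>2 / (2 * n * L) = (\<rho> * real s / (2 * L)) * (real s / n)"
          using npos Lpos by (simp add: field_simps power2_eq_square)
        also have "\<dots> \<le> (\<rho> * real s / (2 * L)) * 1"
          using sle npos rpos Lpos spos by (intro mult_left_mono) auto
        finally show ?thesis by simp
      qed
      also have "\<rho> * real s / (2 * L) \<le> 4 * (real s * \<rho> * L)"
      proof -
        have "1/2 * (1/2) \<le> L * L" using True by (intro mult_mono) auto
        then have "1 \<le> 8 * L * L" by linarith
        then have "\<rho> * real s \<le> (\<rho> * real s) * (8 * L * L)"
          using rpos spos by simp
        then show ?thesis using Lpos by (simp add: field_simps)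
      qed
      finally have Ele: "n * (4 / l\<^sup>2) * exp (- l * \<tau> + l\<^sup>2 * \<rho> / 2) \<le> 4 * (real s * \<rho> * L)"
        using E_eq by simp
      have sE: "sqrt (n * (4 / l\<^sup>2) * exp (- l * \<tau> + l\<^sup>2 * \<rho> / 2)) \<le> 2 * Q"
      proof -
        have "sqrt (n * (4 / l\<^sup>2) * exp (- l * \<tau> + l\<^sup>2 * \<rho> / 2)) \<le> sqrt (4 * (real s * \<rho> * L))"
          using Ele by simp
        also have "\<dots> = 2 * Q" unfolding Q_def by (simp add: real_sqrt_mult)
        finally show ?thesis .
      qed
      have tR: "\<tau> * ((1 + 1/\<gamma>) * sqrt (real s)) = 2 * (1 + 1/\<gamma>) * Q"
        unfolding \<tau>_def Q_def by (simp add: real_sqrt_mult mult.commute mult.left_commute)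
      have Q0: "0 \<le> Q" unfolding Q_def using rpos Lpos by simp
      have fin: "2 * (1 + 1/\<gamma>) * Q + 2 * Q \<le> 6 / \<gamma> * Q"
      proof -
        have "4 \<le> 4 / \<gamma>" using g0 g1 by (simp add: field_simps)
        then have "2 * (1 + 1/\<gamma>) + 2 \<le> 6 / \<gamma>" by (simp add: field_simps)
        then show ?thesis using Q0 by (metis distrib_right mult_right_mono mult_2)
      qed
      have "gaussian_width ((\<lambda>x. D *v x) ` S_gamma s \<gamma>) \<le>
          \<tau> * ((1 + 1/\<gamma>) * sqrt (real s)) + sqrt (n * (4 / l\<^sup>2) * exp (- l * \<tau> + l\<^sup>2 * \<rho> / 2))"
        unfolding n_def by (rule main_bound[OF g0 s1 t0 l0 col])
      also have "\<dots> \<le> 6 / \<gamma> * Q" using tR sE fin by linarith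
      finally show ?thesis unfolding Q_def L_def n_def .
    next
      case False
      define l where "l = sqrt (2 / \<rho>)"
      have l0: "0 < l" unfolding l_def using rpos by simp
      have l2: "l\<^sup>2 = 2 / \<rho>" unfolding l_def using rpos by simp
      have E_eq: "n * (4 / l\<^sup>2) * exp (- l * 0 + l\<^sup>2 * \<rho> / 2) = 2 * exp 1 * \<rho> * n"
        unfolding l2 using rpos by simp
      have "exp L < exp (1/2)" using False by simp
      also have "exp (1/2::real) < 2"
      proof -
        have "(exp (1/2::real))\<^sup>2 = exp 1" by (simp add: power2_eq_square mult_exp_exp)
        also have "\<dots> < 2\<^sup>2" using exp_le by simp
        finally show ?thesis by (rule power2_less_imp_less) simp
      qed
      finally have "sqrt 2 * n / real s < 2" using eL by simp
      then have a1: "sqrt 2 * n < 2 * real s" using spos by (simp add: field_simps)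
      have a2: "1.4 \<le> sqrt (2::real)" by (rule real_le_rsqrt) (simp add: power2_eq_square)
      have "1.4 * n \<le> sqrt 2 * n" using a2 npos by (intro mult_right_mono) auto
      then have "1.4 * n < 2 * real s" using a1 by linarith
      then have n15: "n \<le> 1.5 * real s" using spos by linarith
      have "2 * exp 1 * \<rho> * n \<le> 6 * \<rho> * (1.5 * real s)"
        using exp_le n15 rpos npos by (intro mult_mono) auto
      also have "\<dots> \<le> 36 * (real s * \<rho> * L)"
      proof -
        have "9 * (\<rho> * real s) \<le> (36 * L) * (\<rho> * real s)"
          using L13 rpos spos by (intro mult_right_mono) auto
        then show ?thesis by (simp add: algebra_simps)
      qed
      finally have Ele: "n * (4 / l\<^sup>2) * exp (- l * 0 + l\<^sup>2 * \<rho> / 2) \<le> 36 * (real s * \<rho> * L)"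
        using E_eq by simp
      have sE: "sqrt (n * (4 / l\<^sup>2) * exp (- l * 0 + l\<^sup>2 * \<rho> / 2)) \<le> 6 * Q"
      proof -
        have "sqrt (n * (4 / l\<^sup>2) * exp (- l * 0 + l\<^sup>2 * \<rho> / 2)) \<le> sqrt (36 * (real s * \<rho> * L))"
          using Ele by simp
        also have "\<dots> = 6 * Q" unfolding Q_def by (simp add: real_sqrt_mult)
        finally show ?thesis .
      qed
      have Q0: "0 \<le> Q" unfolding Q_def using rpos Lpos by simp
      have "6 * Q \<le> 6 / \<gamma> * Q"
        using g0 g1 Q0 by (intro mult_right_mono) (auto simp: field_simps)
      have "gaussian_width ((\<lambda>x. D *v x) ` S_gamma s \<gamma>) \<le>
          0 * ((1 + 1/\<gamma>) * sqrt (real s)) + sqrt (n * (4 / l\<^sup>2) * exp (- l * 0 + l\<^sup>2 * \<rho> / 2))"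
        unfolding n_def by (rule main_bound[OF g0 s1 _ l0 col]) simp
      also have "\<dots> \<le> 6 / \<gamma> * Q" using sE \<open>6 * Q \<le> 6 / \<gamma> * Q\<close> by simp
      finally show ?thesis unfolding Q_def L_def n_def .
    qed
  qed
qed

end
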